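(* In $G=BS(1,2)$, let $c_0(n)$ be the number of conjugacy classes of $G$ contained in the subgroup $\mathbb{Z}[1/2]$ whose length with respect to $\{a,t\}$ is $n$. Then the growth rate $\limsup_n c_0(n)^{1/n}$ of these conjugacy classes is approximately $1.348$.
   Context: $BS(1,2)=\langle a,t\mid tat^{-1}=a^2\rangle\cong \mathbb{Z}[1/2]\rtimes\mathbb{Z}$ via $a\mapsto(1,0)$, $t\mapsto(0,1)$; $\mathbb{Z}[1/2]=\{(x,0)\}$. The length of a conjugacy class is the minimal word length of its elements; the growth rate is the reciprocal of the radius of convergence of $\sum c_0(n)z^n$. *)

theory Defs
  imports "HOL-Analysis.Analysis"
begin

text \<open>BS(1,2) realised as Z[1/2] \<rtimes> Z: elements are pairs (x,m) with x a dyadic rational,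
  product (x,m)(y,n) = (x + 2^m y, m+n); a = (1,0), t = (0,1), so t a t^-1 = a^2.\<close>

type_synonym bs = "rat \<times> int"

definition dyadic :: "rat set" where
  "dyadic = {q. \<exists>z::int. \<exists>k::nat. q = of_int z / 2 ^ k}"

definition BS :: "bs set" where
  "BS = {(x, m). x \<in> dyadic}"

definition bs_mult :: "bs \<Rightarrow> bs \<Rightarrow> bs" where
  "bs_mult g h = (fst g + (2::rat) powi (snd g) * fst h, snd g + snd h)"

definition bs_one :: bs where
  "bs_one = (0, 0)"

definition gen_a :: bs where "gen_a = (1, 0)"
definition gen_t :: bs where "gen_t = (0, 1)"

definition bs_gens :: "bs set" where
  "bs_gens = {(1, 0), (-1, 0), (0, 1), (0, -1)}"

definition bs_eval :: "bs list \<Rightarrow> bs" where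
  "bs_eval w = foldr bs_mult w bs_one"

definition word_len :: "bs \<Rightarrow> nat" where
  "word_len g = (LEAST n. \<exists>w. set w \<subseteq> bs_gens \<and> length w = n \<and> bs_eval w = g)"

definition conj_class :: "bs \<Rightarrow> bs set" where
  "conj_class g = {g' \<in> BS. \<exists>h \<in> BS. bs_mult h g = bs_mult g' h}"

definition class_len :: "bs set \<Rightarrow> nat" where
  "class_len C = (LEAST n. \<exists>g \<in> C. word_len g = n)"

definition Zhalf :: "bs set" where
  "Zhalf = {(x, 0) | x. x \<in> dyadic}"

definition c0 :: "nat \<Rightarrow> nat" where
  "c0 n = card {C. (\<exists>g \<in> BS. C = conj_class g) \<and> C \<subseteq> Zhalf \<and> class_len C = n}"

end

theory Submission
  imports Defs "HOL-Real_Asymp.Real_Asymp"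
begin

definition nd :: "int \<Rightarrow> int" where "nd x = (if x mod 4 = 1 then 1 else -1)"
definition stp :: "int \<Rightarrow> int" where "stp x = (if even x then x div 2 else (x - nd x) div 2)"

lemma stp_less: "x \<noteq> 0 \<Longrightarrow> \<bar>stp x\<bar> < \<bar>x\<bar>"
  unfolding stp_def nd_def by (auto simp: abs_if) presburger+

function wt :: "int \<Rightarrow> nat" where
  "wt x = (if x = 0 then 0 else if even x then wt (stp x) else Suc (wt (stp x)))"
  by auto
termination by (relation "Wellfounded.measure (\<lambda>x. nat \<bar>x\<bar>)") (auto dest: stp_less)

function nlen :: "int \<Rightarrow> nat" where
  "nlen x = (if x = 0 then 0 else Suc (nlen (stp x)))"
  by auto
termination by (relation "Wellfounded.measure (\<lambda>x. nat \<bar>x\<bar>)") (auto dest: stp_less)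

declare wt.simps[simp del] nlen.simps[simp del]

lemma stp2: "stp (2*y) = y" by (simp add: stp_def)
lemma stp4p: "stp (4*y+1) = 2*y" unfolding stp_def nd_def by presburger
lemma stp4m: "stp (4*y-1) = 2*y" unfolding stp_def nd_def by presburger

lemma wt0[simp]: "wt 0 = 0" by (simp add: wt.simps)
lemma wt2[simp]: "wt (2*y) = wt y"
  by (cases "y = 0") (simp_all add: wt.simps[of "2*y"] stp2)
lemma wt4p[simp]: "wt (4*y+1) = Suc (wt y)"
proof -
  have "wt (4*y+1) = Suc (wt (2*y))" by (subst wt.simps) (simp add: stp4p, presburger)
  thus ?thesis by simp
qed
lemma wt4m[simp]: "wt (4*y-1) = Suc (wt y)"
proof -
  have "wt (4*y-1) = Suc (wt (2*y))" by (subst wt.simps) (simp add: stp4m, presburger)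
  thus ?thesis by simp
qed
lemma wt4[simp]: "wt (4*y) = wt y" using wt2[of "2*y"] by simp
lemma nlen0[simp]: "nlen 0 = 0" by (simp add: nlen.simps)
lemma nlen_1[simp]: "nlen 1 = 1" "nlen (-1) = 1"
  by (simp_all add: nlen.simps[of 1] nlen.simps[of "-1"] stp_def nd_def)
lemma wt_1[simp]: "wt 1 = 1" "wt (-1) = 1"
  by (simp_all add: wt.simps[of 1] wt.simps[of "-1"] stp_def nd_def)
lemma nlen2: "y \<noteq> 0 \<Longrightarrow> nlen (2*y) = Suc (nlen y)"
  by (simp add: nlen.simps[of "2*y"] stp2)
lemma nlen4p: "nlen (4*y+1) = Suc (nlen (2*y))"
  by (subst nlen.simps) (simp add: stp4p, presburger)
lemma nlen4m: "nlen (4*y-1) = Suc (nlen (2*y))"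
  by (subst nlen.simps) (simp add: stp4m, presburger)

lemma int_cases4:
  fixes x :: int
  obtains y where "x = 2*y" | y where "x = 4*y+1" | y where "x = 4*y-1"
proof -
  have "even x \<or> x mod 4 = 1 \<or> x mod 4 = 3" by presburger
  then consider "even x" | "x mod 4 = 1" | "x mod 4 = 3" by blast
  thus ?thesis
  proof cases
    case 1 then have "x = 2*(x div 2)" by presburger
    then show ?thesis by (rule that(1))
  next
    case 2 then have "x = 4*(x div 4)+1" by presburger
    then show ?thesis by (rule that(2))
  next
    case 3 then have "x = 4*((x+1) div 4)-1" by presburger
    then show ?thesis by (rule that(3))
  qed
qed

lemma wt_pm1: "wt (x+1) \<le> Suc (wt x) \<and> wt (x - 1) \<le> Suc (wt x)"
proof (induction "nat \<bar>x\<bar>" arbitrary: x rule: less_induct)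
  case less
  have IH: "wt (z+1) \<le> Suc (wt z)" "wt (z - 1) \<le> Suc (wt z)" if "\<bar>z\<bar> < \<bar>x\<bar>" for z
    using less that by auto
  show ?case
  proof (cases x rule: int_cases4)
    case (1 y)
    have wx: "wt x = wt y" by (simp only: 1 wt2)
    show ?thesis
    proof (cases y rule: int_cases4)
      case (1 z)
      have a: "x + 1 = 4*z+1" "x - 1 = 4*z - 1" using \<open>x = 2*y\<close> 1 by auto
      have "wt y = wt z" by (simp only: 1 wt2)
      then show ?thesis unfolding a wx using wt4p[of z] wt4m[of z] by simp
    next
      case (2 u)
      have a: "x + 1 = 4*(2*u+1) - 1" "x - 1 = 4*(2*u) + 1" using \<open>x = 2*y\<close> 2 by auto
      have wy: "wt y = Suc (wt u)" by (simp only: 2 wt4p)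
      have "\<bar>2*u\<bar> < \<bar>x\<bar>" using \<open>x = 2*y\<close> 2 by arith
      then have "wt (2*u+1) \<le> Suc (wt (2*u))" using IH(1)[of "2*u"] by auto
      then show ?thesis unfolding a wx wy using wt4m[of "2*u+1"] wt4p[of "2*u"] wt2[of u] by linarith
    next
      case (3 u)
      have a: "x + 1 = 4*(2*u) - 1" "x - 1 = 4*(2*u-1) + 1" using \<open>x = 2*y\<close> 3 by auto
      have wy: "wt y = Suc (wt u)" by (simp only: 3 wt4m)
      have "\<bar>2*u\<bar> < \<bar>x\<bar>" using \<open>x = 2*y\<close> 3 by arith
      then have "wt (2*u-1) \<le> Suc (wt (2*u))" using IH(2)[of "2*u"] by auto
      then show ?thesis unfolding a wx wy using wt4m[of "2*u"] wt4p[of "2*u-1"] wt2[of u] by linarith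
    qed
  next
    case (2 y)
    have a: "x + 1 = 2*(2*y+1)" "x - 1 = 4*y" using 2 by auto
    have wx: "wt x = Suc (wt y)" by (simp only: 2 wt4p)
    have "\<bar>2*y\<bar> < \<bar>x\<bar>" using 2 by arith
    then have "wt (2*y+1) \<le> Suc (wt (2*y))" using IH(1)[of "2*y"] by auto
    then show ?thesis unfolding a wx using wt2[of "2*y+1"] wt2[of y] wt4[of y] by linarith
  next
    case (3 y)
    have a: "x - 1 = 2*(2*y-1)" "x + 1 = 4*y" using 3 by auto
    have wx: "wt x = Suc (wt y)" by (simp only: 3 wt4m)
    have "\<bar>2*y\<bar> < \<bar>x\<bar>" using 3 by arith
    then have "wt (2*y-1) \<le> Suc (wt (2*y))" using IH(2)[of "2*y"] by auto
    then show ?thesis unfolding a wx using wt2[of "2*y-1"] wt2[of y] wt4[of y] by linarith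
  qed
qed

lemma wt_add_pow:
  assumes "s = 1 \<or> s = -1"
  shows "wt (x + s * 2^e) \<le> Suc (wt x)"
  using assms
proof (induction e arbitrary: x rule: less_induct)
  case (less e)
  show ?case
  proof (cases "e = 0")
    case True then show ?thesis using wt_pm1[of x] less.prems by auto
  next
    case False
    then obtain e1 where e1: "e = Suc e1" by (cases e) auto
    show ?thesis
    proof (cases x rule: int_cases4)
      case (1 y)
      have eq: "x + s * 2^e = 2 * (y + s * 2^e1)" using 1 e1 by (simp add: algebra_simps)
      have wx: "wt x = wt y" by (simp only: 1 wt2)
      show ?thesis unfolding eq wx using less.IH[of e1 y] less.prems e1 wt2[of "y + s * 2^e1"] by simp
    next
      case (2 y)
      have wx: "wt x = Suc (wt y)" by (simp only: 2 wt4p)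
      show ?thesis
      proof (cases e1)
        case 0
        show ?thesis
        proof (cases "s = 1")
          case True
          have eq: "x + s * 2^e = 4*(y+1) - 1" using 2 e1 0 True by simp
          show ?thesis unfolding eq wx using wt_pm1[of y] wt4m[of "y+1"] by linarith
        next
          case False
          then have eq: "x + s * 2^e = 4*y - 1" using 2 e1 0 less.prems by simp
          show ?thesis unfolding eq wx using wt4m[of y] by linarith
        qed
      next
        case (Suc e2)
        have eq: "x + s * 2^e = 4 * (y + s * 2^e2) + 1" using 2 e1 Suc by (simp add: algebra_simps)
        have "wt (y + s * 2^e2) \<le> Suc (wt y)" using less.IH[of e2 y] less.prems e1 Suc by simp
        then show ?thesis unfolding eq wx using wt4p[of "y + s * 2^e2"] by linarith
      qed
    next
      case (3 y)
      have wx: "wt x = Suc (wt y)" by (simp only: 3 wt4m)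
      show ?thesis
      proof (cases e1)
        case 0
        show ?thesis
        proof (cases "s = 1")
          case True
          have eq: "x + s * 2^e = 4*y + 1" using 3 e1 0 True by simp
          show ?thesis unfolding eq wx using wt4p[of y] by linarith
        next
          case False
          then have eq: "x + s * 2^e = 4*(y - 1) + 1" using 3 e1 0 less.prems by simp
          show ?thesis unfolding eq wx using wt_pm1[of y] wt4p[of "y - 1"] by linarith
        qed
      next
        case (Suc e2)
        have eq: "x + s * 2^e = 4 * (y + s * 2^e2) - 1" using 3 e1 Suc by (simp add: algebra_simps)
        have "wt (y + s * 2^e2) \<le> Suc (wt y)" using less.IH[of e2 y] less.prems e1 Suc by simp
        then show ?thesis unfolding eq wx using wt4m[of "y + s * 2^e2"] by linarith
      qed
    qed
  qed
qed

lemma nlen_bound: "x \<noteq> 0 \<Longrightarrow> 2 ^ nlen x + 2 \<le> 4 * \<bar>x\<bar>"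
proof (induction "nat \<bar>x\<bar>" arbitrary: x rule: less_induct)
  case less
  show ?case
  proof (cases x rule: int_cases4)
    case (1 y)
    then have "y \<noteq> 0" using less.prems by auto
    then have "2 ^ nlen y + 2 \<le> 4 * \<bar>y\<bar>" using less.hyps[of y] 1 by auto
    then show ?thesis using 1 \<open>y \<noteq> 0\<close> by (simp add: nlen2)
  next
    case (2 y)
    show ?thesis
    proof (cases "y = 0")
      case True then show ?thesis using 2 by (simp add: nlen4p)
    next
      case False
      then have "2 ^ nlen y + 2 \<le> 4 * \<bar>y\<bar>" using less.hyps[of y] 2 by auto
      moreover have "4 * \<bar>y\<bar> - 1 \<le> \<bar>4*y+1\<bar>" by arith
      moreover have "nlen x = Suc (Suc (nlen y))" using 2 False by (simp add: nlen4p nlen2)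
      ultimately show ?thesis using 2 by simp
    qed
  next
    case (3 y)
    show ?thesis
    proof (cases "y = 0")
      case True then show ?thesis using 3 by (simp add: nlen4m)
    next
      case False
      then have "2 ^ nlen y + 2 \<le> 4 * \<bar>y\<bar>" using less.hyps[of y] 3 by auto
      moreover have "4 * \<bar>y\<bar> - 1 \<le> \<bar>4*y-1\<bar>" by arith
      moreover have "nlen x = Suc (Suc (nlen y))" using 3 False by (simp add: nlen4m nlen2)
      ultimately show ?thesis using 3 by simp
    qed
  qed
qed

lemma bs_eval_Nil[simp]: "bs_eval [] = (0,0)" by (simp add: bs_eval_def bs_one_def)
lemma bs_eval_Cons[simp]: "bs_eval (g # w) = bs_mult g (bs_eval w)" by (simp add: bs_eval_def)

lemma bs_mult_simp[simp]: "bs_mult (a, m) (b, n) = (a + 2 powi m * b, m + n)"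
  by (simp add: bs_mult_def)

lemma bs_mult_assoc: "bs_mult (bs_mult a b) c = bs_mult a (bs_mult b c)"
  by (cases a; cases b; cases c) (simp add: power_int_add algebra_simps)

lemma bs_eval_append: "bs_eval (u @ v) = bs_mult (bs_eval u) (bs_eval v)"
proof (induction u)
  case Nil then show ?case by (cases "bs_eval v") simp
next
  case (Cons g u) then show ?case by (simp add: bs_mult_assoc)
qed

lemma bs_eval_single[simp]: "bs_eval [g] = g" by (cases g) simp

lemma dyadic_int[simp]: "of_int z \<in> dyadic"
  unfolding dyadic_def by (rule CollectI, rule exI[of _ z], rule exI[of _ 0]) simp
lemma dyadic_0[simp]: "0 \<in> dyadic" using dyadic_int[of 0] by simp

lemma dyadic_pow: assumes "x \<in> dyadic" shows "2 powi k * x \<in> dyadic"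
proof -
  obtain z j where x: "x = of_int z / 2 ^ j" using assms unfolding dyadic_def by auto
  show ?thesis
  proof (cases "k \<ge> 0")
    case True
    then have "2 powi k * x = of_int (2 ^ nat k * z) / 2 ^ j"
      using x by (simp add: power_int_def)
    then show ?thesis unfolding dyadic_def by blast
  next
    case False
    then have "2 powi k * x = of_int z / 2 ^ (j + nat (-k))"
      using x by (simp add: power_int_def power_add field_simps)
    then show ?thesis unfolding dyadic_def by blast
  qed
qed

lemma conj_class_Z:
  assumes "x \<in> dyadic"
  shows "conj_class (x, 0) = {(2 powi k * x, 0::int) | k::int. True}"
proof
  show "conj_class (x, 0) \<subseteq> {(2 powi k * x, 0::int) | k::int. True}"
  proof
    fix g assume "g \<in> conj_class (x, 0)"
    then obtain h where "bs_mult h (x,0) = bs_mult g h" unfolding conj_class_def by auto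
    then show "g \<in> {(2 powi k * x, 0::int) | k::int. True}"
      by (cases g; cases h) auto
  qed
next
  show "{(2 powi k * x, 0::int) | k::int. True} \<subseteq> conj_class (x, 0)"
  proof
    fix g assume "g \<in> {(2 powi k * x, 0::int) | k::int. True}"
    then obtain k where g: "g = (2 powi k * x, 0::int)" by auto
    have "(0, k) \<in> BS" by (simp add: BS_def)
    moreover have "g \<in> BS" using g dyadic_pow[OF assms] by (simp add: BS_def)
    moreover have "bs_mult (0,k) (x,0) = bs_mult g (0,k)" using g by simp
    ultimately show "g \<in> conj_class (x, 0)" unfolding conj_class_def by blast
  qed
qed

lemma conj_class_pow:
  assumes "x \<in> dyadic"
  shows "conj_class (2 powi j * x, 0) = conj_class (x, 0)"
proof -
  have "{(2 powi k * (2 powi j * x), 0::int) | k::int. True} = {(2 powi k * x, 0::int) | k::int. True}"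
  proof (intro equalityI subsetI)
    fix g assume "g \<in> {(2 powi k * (2 powi j * x), 0::int) | k::int. True}"
    then obtain k where "g = (2 powi k * (2 powi j * x), 0)" by auto
    then have "g = (2 powi (k + j) * x, 0)" by (simp add: power_int_add mult.assoc)
    then show "g \<in> {(2 powi k * x, 0::int) | k::int. True}" by blast
  next
    fix g assume "g \<in> {(2 powi k * x, 0::int) | k::int. True}"
    then obtain k where "g = (2 powi k * x, 0)" by auto
    then have "g = (2 powi (k - j) * (2 powi j * x), 0)"
      by (simp add: power_int_diff mult.assoc)
    then show "g \<in> {(2 powi k * (2 powi j * x), 0::int) | k::int. True}" by blast
  qed
  then show ?thesis using conj_class_Z[OF assms] conj_class_Z[OF dyadic_pow[OF assms]] by simp
qed

function nafw :: "int \<Rightarrow> bs list" where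
  "nafw x = (if x = 0 then [] else
     (if even x then [] else [(of_int (nd x), 0)]) @ [(0,1)] @ nafw (stp x) @ [(0,-1)])"
  by auto
termination by (relation "Wellfounded.measure (\<lambda>x. nat \<bar>x\<bar>)") (auto dest: stp_less)
declare nafw.simps[simp del]

lemma nafw_props: "set (nafw x) \<subseteq> bs_gens \<and> length (nafw x) = 2 * nlen x + wt x
   \<and> bs_eval (nafw x) = (of_int x, 0)"
proof (induction x rule: nafw.induct)
  case (1 x)
  show ?case
  proof (cases "x = 0")
    case True then show ?thesis by (simp add: nafw.simps)
  next
    case False
    note IH = 1[OF False]
    have nl: "nlen x = Suc (nlen (stp x))" using False by (simp add: nlen.simps[of x])
    show ?thesis
    proof (cases "even x")
      case True
      have wx: "wt x = wt (stp x)" using False True by (simp add: wt.simps[of x])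
      have sx: "x = 2 * stp x" using True by (simp add: stp_def)
      have "bs_eval (nafw x) = (of_int x, 0)"
        using IH False True by (simp add: nafw.simps[of x] bs_eval_append, subst (2) sx, simp)
      then show ?thesis using IH False True nl wx
        by (simp add: nafw.simps[of x] bs_gens_def)
    next
      case odd: False
      have wx: "wt x = Suc (wt (stp x))" using False odd by (simp add: wt.simps[of x])
      have sx: "x = nd x + 2 * stp x" using odd unfolding stp_def nd_def by presburger
      have nd: "nd x = 1 \<or> nd x = -1" by (simp add: nd_def)
      have "bs_eval (nafw x) = (of_int x, 0)"
        using IH False odd by (simp add: nafw.simps[of x] bs_eval_append, subst (3) sx, simp)
      moreover have "set (nafw x) \<subseteq> bs_gens" using IH False odd nd
        by (auto simp add: nafw.simps[of x] bs_gens_def)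
      ultimately show ?thesis using IH False odd nl wx
        by (simp add: nafw.simps[of x])
    qed
  qed
qed

lemma eval_rep_t: "bs_eval (replicate k (0,1)) = (0, int k)"
  by (induction k) auto
lemma eval_rep_ti: "bs_eval (replicate k (0,-1)) = (0, - int k)"
  by (induction k) auto

lemma dyadic_word:
  assumes "x \<in> dyadic" shows "\<exists>w. set w \<subseteq> bs_gens \<and> bs_eval w = (x, 0)"
proof -
  obtain z k where x: "x = of_int z / 2 ^ k" using assms unfolding dyadic_def by auto
  let ?w = "replicate k (0,-1) @ nafw z @ replicate k (0,1)"
  have "set ?w \<subseteq> bs_gens" using nafw_props[of z] by (auto simp: bs_gens_def)
  moreover have "bs_eval ?w = (x, 0)"
    using nafw_props[of z] x by (auto simp add: bs_eval_append eval_rep_t eval_rep_ti power_int_def field_simps)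
  ultimately show ?thesis by blast
qed

lemma word_len_le: "set w \<subseteq> bs_gens \<Longrightarrow> bs_eval w = g \<Longrightarrow> word_len g \<le> length w"
  unfolding word_len_def by (rule Least_le) blast

lemma word_len_ex: assumes "\<exists>w. set w \<subseteq> bs_gens \<and> bs_eval w = g"
  shows "\<exists>w. set w \<subseteq> bs_gens \<and> length w = word_len g \<and> bs_eval w = g"
proof -
  from assms obtain w where "set w \<subseteq> bs_gens \<and> bs_eval w = g" by blast
  then have "\<exists>n w. set w \<subseteq> bs_gens \<and> length w = n \<and> bs_eval w = g" by blast
  then show ?thesis unfolding word_len_def by (rule LeastI_ex)
qed

definition Sset :: "nat \<Rightarrow> bs set set" where
  "Sset n = {C. (\<exists>g \<in> BS. C = conj_class g) \<and> C \<subseteq> Zhalf \<and> class_len C = n}"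

lemma c0_Sset: "c0 n = card (Sset n)" by (simp add: c0_def Sset_def)

lemma self_in_class: "g \<in> BS \<Longrightarrow> g \<in> conj_class g"
  unfolding conj_class_def
  by (cases g) (auto intro!: bexI[of _ "(0,0)"] simp: BS_def)

lemma Sset_word:
  assumes "C \<in> Sset n"
  shows "\<exists>w x. set w \<subseteq> bs_gens \<and> length w = n \<and> bs_eval w = (x, 0) \<and> x \<in> dyadic
     \<and> C = conj_class (x, 0)"
proof -
  from assms obtain g0 where g0: "g0 \<in> BS" "C = conj_class g0" and CZ: "C \<subseteq> Zhalf"
    and cl: "class_len C = n" unfolding Sset_def by auto
  have "g0 \<in> C" using self_in_class[OF g0(1)] g0(2) by simp
  then obtain x0 where x0: "g0 = (x0, 0)" "x0 \<in> dyadic" using CZ unfolding Zhalf_def by auto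
  have ex: "\<exists>n. \<exists>g\<in>C. word_len g = n" using \<open>g0 \<in> C\<close> by blast
  have "\<exists>g \<in> C. word_len g = (LEAST n. \<exists>g\<in>C. word_len g = n)"
    by (rule LeastI_ex[OF ex])
  then have "\<exists>g \<in> C. word_len g = n" using cl unfolding class_len_def by simp
  then obtain g where g: "g \<in> C" "word_len g = n" by blast
  then obtain k where gk: "g = (2 powi k * x0, 0)" using g0(2) x0 conj_class_Z[OF x0(2)] by auto
  have dg: "2 powi k * x0 \<in> dyadic" using dyadic_pow[OF x0(2)] .
  obtain w where w: "set w \<subseteq> bs_gens" "length w = word_len g" "bs_eval w = g"
    using word_len_ex[of g] dyadic_word[OF dg] gk by blast
  have "C = conj_class (2 powi k * x0, 0)" using conj_class_pow[OF x0(2)] g0(2) x0(1) by simp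
  then show ?thesis using w g gk dg by auto
qed

lemma finite_Sset: "finite (Sset n)"
proof -
  have "Sset n \<subseteq> (\<lambda>w. conj_class (bs_eval w)) ` {w. set w \<subseteq> bs_gens \<and> length w = n}"
  proof
    fix C assume "C \<in> Sset n"
    then obtain w x where "set w \<subseteq> bs_gens" "length w = n" "bs_eval w = (x, 0)"
      "C = conj_class (x, 0)" using Sset_word by blast
    then show "C \<in> (\<lambda>w. conj_class (bs_eval w)) ` {w. set w \<subseteq> bs_gens \<and> length w = n}"
      by (intro image_eqI[of _ _ w]) auto
  qed
  moreover have "finite {w. set w \<subseteq> bs_gens \<and> length w = n}"
    by (rule finite_lists_length_eq) (simp add: bs_gens_def)
  ultimately show ?thesis by (meson finite_surj)
qed

definition Acnt :: "bs list \<Rightarrow> nat" where "Acnt w = length (filter (\<lambda>g. snd g = 0) w)"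
definition Tcnt :: "bs list \<Rightarrow> nat" where "Tcnt w = length (filter (\<lambda>g. snd g \<noteq> 0) w)"

lemma AT_len: "Acnt w + Tcnt w = length w"
  unfolding Acnt_def Tcnt_def by (rule sum_length_filter_compl)

lemma walk:
  assumes "set w \<subseteq> bs_gens"
  shows "\<exists>m M X. - int m \<le> snd (bs_eval w) \<and> snd (bs_eval w) \<le> int M
    \<and> 2*(M+m) \<le> Tcnt w + nat \<bar>snd (bs_eval w)\<bar> \<and> fst (bs_eval w) = of_int X / 2^m
    \<and> wt X \<le> Acnt w \<and> \<bar>X\<bar> \<le> int (Acnt w) * 2^(M+m)"
  using assms
proof (induction w)
  case Nil
  show ?case by (rule exI[of _ 0], rule exI[of _ 0], rule exI[of _ 0]) (simp add: Acnt_def Tcnt_def)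
next
  case (Cons g w)
  then have gg: "g \<in> bs_gens" and ws: "set w \<subseteq> bs_gens" by auto
  obtain x H where xH: "bs_eval w = (x, H)" by fastforce
  from Cons.IH[OF ws] obtain m M X where
    h1: "- int m \<le> H" and h2: "H \<le> int M" and h3: "2*(M+m) \<le> Tcnt w + nat \<bar>H\<bar>"
    and h4: "x = of_int X / 2^m" and h5: "wt X \<le> Acnt w" and h6: "\<bar>X\<bar> \<le> int (Acnt w) * 2^(M+m)"
    unfolding xH by auto
  have pos: "(0::int) < 2^(M+m)" by simp
  consider (a) s where "g = (of_int s, 0)" "s = 1 \<or> s = -1" | (t) "g = (0,1)" | (ti) "g = (0,-1)"
    using gg unfolding bs_gens_def by (auto intro: that(1)[of 1] that(1)[of "-1"])
  then show ?case
  proof cases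
    case a
    have ev: "bs_eval (g # w) = (of_int s + x, H)" using a xH by simp
    have A: "Acnt (g # w) = Suc (Acnt w)" "Tcnt (g # w) = Tcnt w" using a by (simp_all add: Acnt_def Tcnt_def)
    have "of_int s + x = of_int (X + s * 2^m) / 2^m" using h4 by (simp add: field_simps)
    moreover have "wt (X + s * 2^m) \<le> Suc (Acnt w)" using wt_add_pow[of s X m] a(2) h5 by simp
    moreover have "\<bar>X + s * 2^m\<bar> \<le> int (Suc (Acnt w)) * 2^(M+m)"
    proof -
      have "\<bar>s * 2^m\<bar> = (2::int)^m" using a(2) by auto
      then have "\<bar>X + s * 2^m\<bar> \<le> \<bar>X\<bar> + 2^m" using abs_triangle_ineq[of X "s * 2^m"] by linarith
      also have "(2::int)^m \<le> 2^(M+m)" by (rule power_increasing) auto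
      finally show ?thesis using h6 by (simp add: algebra_simps)
    qed
    ultimately show ?thesis unfolding ev A using h1 h2 h3
      by (intro exI[of _ m] exI[of _ M] exI[of _ "X + s * 2^m"]) auto
  next
    case t
    have ev: "bs_eval (g # w) = (2 * x, H + 1)" using t xH by simp
    have A: "Acnt (g # w) = Acnt w" "Tcnt (g # w) = Suc (Tcnt w)" using t by (simp_all add: Acnt_def Tcnt_def)
    show ?thesis
    proof (cases m)
      case 0
      have "2 * x = of_int (2 * X) / 2^0" using h4 0 by simp
      moreover have "\<bar>2 * X\<bar> \<le> int (Acnt w) * 2^(Suc M + 0)" using h6 0 by simp
      moreover have "2 * (Suc M + 0) \<le> Suc (Tcnt w) + nat \<bar>H + 1\<bar>" using h1 h3 0 by auto
      ultimately show ?thesis unfolding ev A using h1 h2 h5 0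
        by (intro exI[of _ 0] exI[of _ "Suc M"] exI[of _ "2*X"]) auto
    next
      case (Suc m1)
      have "2 * x = of_int X / 2^m1" using h4 Suc by simp
      moreover have "\<bar>X\<bar> \<le> int (Acnt w) * 2^(Suc M + m1)" using h6 Suc by simp
      moreover have "2 * (Suc M + m1) \<le> Suc (Tcnt w) + nat \<bar>H + 1\<bar>" using h3 Suc by auto
      ultimately show ?thesis unfolding ev A using h1 h2 h5 Suc
        by (intro exI[of _ m1] exI[of _ "Suc M"] exI[of _ X]) auto
    qed
  next
    case ti
    have ev: "bs_eval (g # w) = (x / 2, H - 1)" using ti xH by (simp add: power_int_minus)
    have A: "Acnt (g # w) = Acnt w" "Tcnt (g # w) = Suc (Tcnt w)" using ti by (simp_all add: Acnt_def Tcnt_def)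
    have x2: "x / 2 = of_int X / 2^(Suc m)" using h4 by simp
    show ?thesis
    proof (cases M)
      case 0
      have "\<bar>X\<bar> \<le> int (Acnt w) * 2^(0 + Suc m)"
      proof -
        have "(2::int)^(M+m) \<le> 2^(0 + Suc m)" using 0 by simp
        then show ?thesis using h6 by (meson mult_left_mono of_nat_0_le_iff order_trans)
      qed
      moreover have "2 * (0 + Suc m) \<le> Suc (Tcnt w) + nat \<bar>H - 1\<bar>" using h2 h3 0 by auto
      ultimately show ?thesis unfolding ev A using h1 h2 h5 0 x2
        by (intro exI[of _ "Suc m"] exI[of _ 0] exI[of _ X]) auto
    next
      case (Suc M1)
      have "\<bar>X\<bar> \<le> int (Acnt w) * 2^(M1 + Suc m)" using h6 Suc by simp
      moreover have "2 * (M1 + Suc m) \<le> Suc (Tcnt w) + nat \<bar>H - 1\<bar>" using h3 Suc by auto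
      ultimately show ?thesis unfolding ev A using h1 h2 h5 Suc x2
        by (intro exI[of _ "Suc m"] exI[of _ M1] exI[of _ X]) auto
    qed
  qed
qed


subsection \<open>Counting\<close>

definition cost :: "int \<Rightarrow> nat" where "cost x = 2 * nlen x + wt x"
definition E :: "nat \<Rightarrow> int set" where "E B = {x. cost x \<le> B}"

lemma wt_pos: "x \<noteq> 0 \<Longrightarrow> wt x \<ge> 1"
proof (induction "nat \<bar>x\<bar>" arbitrary: x rule: less_induct)
  case less
  show ?case
  proof (cases x rule: int_cases4)
    case (1 y)
    then have "y \<noteq> 0" "\<bar>y\<bar> < \<bar>x\<bar>" using less.prems by auto
    then show ?thesis using less.hyps[of y] 1 by auto
  qed auto
qed

lemma nlen_pos: "x \<noteq> 0 \<Longrightarrow> nlen x \<ge> 1"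
  by (simp add: nlen.simps[of x])

lemma cost_pos: "x \<noteq> 0 \<Longrightarrow> cost x \<ge> 3"
  using wt_pos[of x] nlen_pos[of x] by (simp add: cost_def)

lemma cost0[simp]: "cost 0 = 0" by (simp add: cost_def)

lemma cost2: "y \<noteq> 0 \<Longrightarrow> cost (2*y) = cost y + 2"
  by (simp add: cost_def nlen2)
lemma cost4p: "y \<noteq> 0 \<Longrightarrow> cost (4*y+1) = cost y + 5"
  by (simp add: cost_def nlen4p nlen2)
lemma cost4m: "y \<noteq> 0 \<Longrightarrow> cost (4*y-1) = cost y + 5"
  by (simp add: cost_def nlen4m nlen2)
lemma cost1: "cost 1 = 3" "cost (-1) = 3" by (simp_all add: cost_def)

lemma cost2_le: "cost (2*y) \<le> cost y + 2"
  by (cases "y = 0") (simp_all add: cost2)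
lemma cost4p_le: "cost (4*y+1) \<le> cost y + 5"
  by (cases "y = 0") (simp_all add: cost4p cost1)
lemma cost4m_le: "cost (4*y-1) \<le> cost y + 5"
  using cost4m[of y] cost1 by (cases "y = 0") simp_all

lemma E_small: "B < 5 \<Longrightarrow> E B \<subseteq> {0, 1, -1}"
proof
  fix x assume B: "B < 5" and "x \<in> E B"
  then have cx: "cost x < 5" by (simp add: E_def)
  show "x \<in> {0, 1, -1}"
  proof (cases x rule: int_cases4)
    case (1 y)
    then show ?thesis using cx cost2[of y] cost_pos[of y] by (cases "y = 0") auto
  next
    case (2 y)
    then show ?thesis using cx cost4p[of y] cost_pos[of y] by (cases "y = 0") auto
  next
    case (3 y)
    then show ?thesis using cx cost4m[of y] cost_pos[of y] by (cases "y = 0") auto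
  qed
qed

lemma E_sub: "E B \<subseteq> {0, 1, -1} \<union> (\<lambda>y. 2*y) ` E (B-2) \<union> (\<lambda>y. 4*y+1) ` E (B-5) \<union> (\<lambda>y. 4*y-1) ` E (B-5)"
proof
  fix x assume "x \<in> E B"
  then have cx: "cost x \<le> B" by (simp add: E_def)
  show "x \<in> {0, 1, -1} \<union> (\<lambda>y. 2*y) ` E (B-2) \<union> (\<lambda>y. 4*y+1) ` E (B-5) \<union> (\<lambda>y. 4*y-1) ` E (B-5)"
  proof (cases x rule: int_cases4)
    case (1 y)
    show ?thesis
    proof (cases "y = 0")
      case False
      then have "y \<in> E (B-2)" using cx cost2[of y] 1 by (simp add: E_def)
      then show ?thesis using 1 by blast
    qed (use 1 in auto)
  next
    case (2 y)
    show ?thesis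
    proof (cases "y = 0")
      case False
      then have "y \<in> E (B-5)" using cx cost4p[of y] 2 by (simp add: E_def)
      then show ?thesis using 2 by blast
    qed (use 2 in auto)
  next
    case (3 y)
    show ?thesis
    proof (cases "y = 0")
      case False
      then have "y \<in> E (B-5)" using cx cost4m[of y] 3 by (simp add: E_def)
      then show ?thesis using 3 by blast
    qed (use 3 in auto)
  qed
qed

lemma E_upper:
  fixes r :: real
  assumes r1: "1 \<le> r" and r5: "r^3 + 2 \<le> r^5"
  shows "finite (E B) \<and> real (card (E B)) \<le> 5 * r^B - 3/2"
proof (induction B rule: less_induct)
  case (less B)
  show ?case
  proof (cases "B < 5")
    case True
    then have sub: "E B \<subseteq> {0,1,-1}" by (rule E_small)
    then have fin: "finite (E B)" by (rule finite_subset) simp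
    have "card (E B) \<le> card {0,1,-1::int}" by (rule card_mono[OF _ sub]) simp
    also have "\<dots> = 3" by simp
    finally have "real (card (E B)) \<le> 3" by simp
    moreover have "1 \<le> r^B" using r1 by simp
    ultimately show ?thesis using fin by simp
  next
    case False
    have I2: "finite (E (B-2))" "real (card (E (B-2))) \<le> 5 * r^(B-2) - 3/2" using less.IH[of "B-2"] False by auto
    have I5: "finite (E (B-5))" "real (card (E (B-5))) \<le> 5 * r^(B-5) - 3/2" using less.IH[of "B-5"] False by auto
    let ?U = "{0, 1, -1} \<union> (\<lambda>y. 2*y) ` E (B-2) \<union> (\<lambda>y. 4*y+1) ` E (B-5) \<union> (\<lambda>y. (4::int)*y-1) ` E (B-5)"
    have finU: "finite ?U" using I2 I5 by simp
    have fin: "finite (E B)" using finite_subset[OF E_sub finU] .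
    have "card (E B) \<le> card ?U" by (rule card_mono[OF finU E_sub])
    also have "\<dots> \<le> card {0, 1, -1::int} + card ((\<lambda>y. 2*y) ` E (B-2)) + card ((\<lambda>y. 4*y+1) ` E (B-5)) + card ((\<lambda>y. (4::int)*y-1) ` E (B-5))"
      (is "card (?A \<union> ?B \<union> ?C \<union> ?D) \<le> _")
    proof -
      have "card (?A \<union> ?B \<union> ?C \<union> ?D) \<le> card (?A \<union> ?B \<union> ?C) + card ?D" by (rule card_Un_le)
      moreover have "card (?A \<union> ?B \<union> ?C) \<le> card (?A \<union> ?B) + card ?C" by (rule card_Un_le)
      moreover have "card (?A \<union> ?B) \<le> card ?A + card ?B" by (rule card_Un_le)
      ultimately show ?thesis by linarith
    qed
    also have "\<dots> \<le> 3 + card (E (B-2)) + card (E (B-5)) + card (E (B-5))"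
      by (intro add_mono card_image_le I2 I5) simp_all
    finally have "real (card (E B)) \<le> 3 + real (card (E (B-2))) + 2 * real (card (E (B-5)))" by simp
    also have "\<dots> \<le> 5 * (r^(B-2) + 2 * r^(B-5)) - 3/2" using I2 I5 by simp
    also have "r^(B-2) + 2 * r^(B-5) = r^(B-5) * (r^3 + 2)"
    proof -
      obtain k where k: "B = k + 5" using False by (metis add.commute le_Suc_ex not_less)
      show ?thesis unfolding k by (simp add: power_add algebra_simps)
    qed
    also have "r^(B-5) * (r^3 + 2) \<le> r^(B-5) * r^5" using r5 r1 by (intro mult_left_mono) simp_all
    also have "r^(B-5) * r^5 = r^B" using False by (simp add: power_add[symmetric])
    finally show ?thesis using fin by simp
  qed
qed

lemma rho_up: "(1348/1000::real)^3 + 2 \<le> (1348/1000)^5" by (simp add: eval_nat_numeral)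

lemma finite_E: "finite (E B)" using E_upper[OF _ rho_up] by simp

lemma E_lower:
  fixes r :: real
  assumes r1: "1 \<le> r" and r5: "r^5 \<le> r^3 + 2"
  shows "r^B / r^4 \<le> real (card (E B))"
proof (induction B rule: less_induct)
  case (less B)
  have fin: "finite (E B)" by (rule finite_E)
  have "0 \<in> E B" by (simp add: E_def)
  then have c1: "1 \<le> card (E B)" using fin by (simp add: Suc_le_eq card_gt_0_iff) blast
  show ?case
  proof (cases "B < 5")
    case True
    have "r^B \<le> r^4" using True r1 by (intro power_increasing) simp_all
    then have "r^B / r^4 \<le> 1" using r1 by simp
    then show ?thesis using c1 by simp
  next
    case False
    have I2: "r^(B-2) / r^4 \<le> real (card (E (B-2)))" using less.IH[of "B-2"] False by auto
    have I5: "r^(B-5) / r^4 \<le> real (card (E (B-5)))" using less.IH[of "B-5"] False by auto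
    have f2: "finite (E (B-2))" and f5: "finite (E (B-5))" by (rule finite_E)+
    let ?P = "(\<lambda>y. 2*y) ` E (B-2)" and ?Q = "(\<lambda>y. 4*y+1) ` E (B-5)" and ?R = "(\<lambda>y. (4::int)*y-1) ` E (B-5)"
    have sub: "?P \<union> ?Q \<union> ?R \<subseteq> E B"
    proof -
      have "?P \<subseteq> E B"
      proof
        fix z assume "z \<in> ?P"
        then obtain y where "y \<in> E (B-2)" "z = 2*y" by blast
        then show "z \<in> E B" using cost2_le[of y] False by (simp add: E_def)
      qed
      moreover have "?Q \<subseteq> E B"
      proof
        fix z assume "z \<in> ?Q"
        then obtain y where "y \<in> E (B-5)" "z = 4*y+1" by blast
        then show "z \<in> E B" using cost4p_le[of y] False by (simp add: E_def)
      qed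
      moreover have "?R \<subseteq> E B"
      proof
        fix z assume "z \<in> ?R"
        then obtain y where "y \<in> E (B-5)" "z = 4*y-1" by blast
        then show "z \<in> E B" using cost4m_le[of y] False by (simp add: E_def)
      qed
      ultimately show ?thesis by blast
    qed
    have d1: "?P \<inter> ?Q = {}"
    proof -
      have "2*a \<noteq> 4*b+(1::int)" for a b by presburger
      then show ?thesis by blast
    qed
    have d2: "(?P \<union> ?Q) \<inter> ?R = {}"
    proof -
      have "2*a \<noteq> 4*b-(1::int)" "4*a+1 \<noteq> 4*b-(1::int)" for a b by presburger+
      then show ?thesis by blast
    qed
    have cP: "card ?P = card (E (B-2))" by (rule card_image) (simp add: inj_on_def)
    have cQ: "card ?Q = card (E (B-5))" by (rule card_image) (simp add: inj_on_def)
    have cR: "card ?R = card (E (B-5))" by (rule card_image) (simp add: inj_on_def)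
    have eqc: "card (?P \<union> ?Q \<union> ?R) = card (E (B-2)) + card (E (B-5)) + card (E (B-5))"
      using d1 d2 f2 f5 cP cQ cR by (simp add: card_Un_disjoint)
    have "card (?P \<union> ?Q \<union> ?R) \<le> card (E B)" by (rule card_mono[OF fin sub])
    then have "card (E (B-2)) + 2 * card (E (B-5)) \<le> card (E B)" using eqc by simp
    then have "real (card (E (B-2)) + 2 * card (E (B-5))) \<le> real (card (E B))" by (simp only: of_nat_le_iff)
    then have "real (card (E (B-2))) + 2 * real (card (E (B-5))) \<le> real (card (E B))" by simp
    moreover have "r^B / r^4 \<le> r^(B-2) / r^4 + 2 * (r^(B-5) / r^4)"
    proof -
      have "r^B = r^(B-5) * r^5" using False by (simp add: power_add[symmetric])
      also have "\<dots> \<le> r^(B-5) * (r^3 + 2)" using r5 r1 by (intro mult_left_mono) simp_all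
      also have "\<dots> = r^(B-2) + 2 * r^(B-5)"
      proof -
        obtain k where k: "B = k + 5" using False by (metis add.commute le_Suc_ex not_less)
        show ?thesis unfolding k by (simp add: power_add algebra_simps)
      qed
      finally show ?thesis using r1 by (simp add: divide_right_mono add_divide_distrib[symmetric])
    qed
    ultimately show ?thesis using I2 I5 by linarith
  qed
qed


definition Lg :: "nat \<Rightarrow> nat" where "Lg n = (LEAST L. n < 2^L)"

lemma Lg_gt: "n < 2 ^ Lg n"
  unfolding Lg_def by (rule LeastI[of _ n]) (rule less_exp)

lemma Lg_le: "2 ^ Lg n \<le> 2 * n + 1"
proof (cases "Lg n")
  case 0 then show ?thesis by simp
next
  case (Suc L)
  then have "\<not> n < 2 ^ L" using not_less_Least[of L "\<lambda>L. n < 2^L"] unfolding Lg_def by auto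
  then show ?thesis using Suc by simp
qed

lemma Sset_upper: "Sset n \<subseteq> (\<lambda>X. conj_class (of_int X, 0)) ` E (n + 2 * Lg n + 2)"
proof
  fix C assume "C \<in> Sset n"
  then obtain w x where w: "set w \<subseteq> bs_gens" "length w = n" "bs_eval w = (x, 0)" "x \<in> dyadic"
    "C = conj_class (x, 0)" using Sset_word by blast
  from walk[OF w(1)] obtain m M X where
    h3: "2*(M+m) \<le> Tcnt w" and h4: "x = of_int X / 2^m" and h5: "wt X \<le> Acnt w"
    and h6: "\<bar>X\<bar> \<le> int (Acnt w) * 2^(M+m)"
    using w(3) by auto
  have AT: "Acnt w + Tcnt w = n" using AT_len[of w] w(2) by simp
  have eq: "conj_class ((2::rat)^m * x, 0) = conj_class (x, 0)" using conj_class_pow[OF w(4), of "int m"] by simp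
  have "(2::rat)^m * x = of_int X" using h4 by simp
  then have C: "C = conj_class (of_int X, 0)" using eq w(5) by simp
  have "cost X \<le> n + 2 * Lg n + 2"
  proof (cases "X = 0")
    case True then show ?thesis by simp
  next
    case False
    have "(2::int) ^ nlen X < 4 * \<bar>X\<bar>" using nlen_bound[OF False] by simp
    also have "\<dots> \<le> 4 * (int (Acnt w) * 2^(M+m))" using h6 by simp
    also have "\<dots> \<le> 4 * (int n * 2^(M+m))" using AT by (intro mult_left_mono) simp_all
    also have "\<dots> < 4 * (2 ^ Lg n * 2^(M+m))"
    proof -
      have "int n < 2 ^ Lg n" using Lg_gt[of n] by (metis of_nat_less_iff of_nat_numeral of_nat_power)
      then show ?thesis by simp
    qed
    also have "\<dots> = 2 ^ (Lg n + M + m + 2)" by (simp add: power_add)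
    finally have F: "(2::int) ^ nlen X < 2 ^ (Lg n + M + m + 2)" .
    have "nlen X < Lg n + M + m + 2" by (rule power_less_imp_less_exp[OF _ F]) simp
    then have "2 * nlen X \<le> 2 * Lg n + 2 * (M + m) + 2" by simp
    then show ?thesis using h3 h5 AT unfolding cost_def by linarith
  qed
  then show "C \<in> (\<lambda>X. conj_class (of_int X, 0)) ` E (n + 2 * Lg n + 2)"
    unfolding C E_def by blast
qed

lemma pow_split: "(r::real) ^ (n + 2 * L + 2) = r^2 * (r^2)^L * r^n"
  unfolding power_add power_mult[symmetric] by (simp add: ac_simps)

lemma E_up: "real (card (E B)) \<le> 5 * (1348/1000)^B - 3/2"
  using E_upper[OF _ rho_up, of B] by simp

lemma c0_upper: "real (c0 n) \<le> 5 * (1348/1000)^2 * (2 * real n + 1) * (1348/1000)^n"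
proof -
  define r :: real where "r = 1348/1000"
  have r0: "0 \<le> r" and r2: "r^2 \<le> 2" unfolding r_def by (simp_all add: eval_nat_numeral)
  have "c0 n \<le> card ((\<lambda>X. conj_class (of_int X, 0)) ` E (n + 2 * Lg n + 2))"
    unfolding c0_Sset by (rule card_mono[OF _ Sset_upper]) (simp add: finite_E)
  also have "\<dots> \<le> card (E (n + 2 * Lg n + 2))" by (rule card_image_le[OF finite_E])
  finally have "real (c0 n) \<le> real (card (E (n + 2 * Lg n + 2)))" by simp
  also have "\<dots> \<le> 5 * r ^ (n + 2 * Lg n + 2) - 3/2" unfolding r_def by (rule E_up)
  finally have 1: "real (c0 n) \<le> 5 * (r^2 * (r^2)^(Lg n) * r^n)" unfolding pow_split by simp
  have "(r^2)^(Lg n) \<le> 2 ^ Lg n" by (rule power_mono[OF r2]) simp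
  also have "real (2 ^ Lg n) \<le> real (2 * n + 1)" using Lg_le[of n] by (simp only: of_nat_le_iff)
  then have "(2::real) ^ Lg n \<le> 2 * real n + 1" by simp
  finally have 2: "(r^2)^(Lg n) \<le> 2 * real n + 1" .
  have "5 * (r^2 * (r^2)^(Lg n) * r^n) \<le> 5 * (r^2 * (2 * real n + 1) * r^n)"
    using 2 r0 by (intro mult_left_mono mult_right_mono) simp_all
  from order_trans[OF 1 this] have "real (c0 n) \<le> 5 * (r^2 * (2 * real n + 1) * r^n)" .
  then show ?thesis unfolding r_def by (simp add: ac_simps)
qed

lemma upper_ev: "eventually (\<lambda>n. root n (real (c0 n)) \<le> 13482/10000) sequentially"
proof -
  define K :: real where "K = 5 * (1348/1000)^2"
  have lim: "(\<lambda>n::nat. (K * (2 * real n + 1)) powr (1 / real n)) \<longlonglongrightarrow> 1"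
    unfolding K_def by real_asymp
  have ev1: "eventually (\<lambda>n. (K * (2 * real n + 1)) powr (1 / real n) < 13482/13480) sequentially"
  proof -
    have "(1::real) < 13482/13480" by simp
    from order_tendstoD(2)[OF lim this] show ?thesis .
  qed
  show ?thesis using ev1 eventually_gt_at_top[of 0]
  proof eventually_elim
    case (elim n)
    have K0: "0 \<le> K * (2 * real n + 1)" unfolding K_def by simp
    have "root n (real (c0 n)) \<le> root n (K * (2 * real n + 1) * (1348/1000)^n)"
      using c0_upper[of n] elim(2) unfolding K_def by (simp add: ac_simps)
    also have "\<dots> = root n (K * (2 * real n + 1)) * (1348/1000)"
      using elim(2) by (simp add: real_root_mult real_root_power_cancel)
    also have "root n (K * (2 * real n + 1)) = (K * (2 * real n + 1)) powr (1 / real n)"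
      using elim(2) K0 by (simp add: root_powr_inverse)
    also have "(K * (2 * real n + 1)) powr (1 / real n) * (1348/1000) \<le> 13482/13480 * (1348/1000)"
      using elim(1) by simp
    finally show ?case by simp
  qed
qed

lemma limsup_upper: "limsup (\<lambda>n. ereal (root n (real (c0 n)))) < ereal 1.3485"
proof -
  have "limsup (\<lambda>n. ereal (root n (real (c0 n)))) \<le> ereal (13482/10000)"
    by (rule Limsup_bounded) (use upper_ev in \<open>auto elim: eventually_mono\<close>)
  also have "\<dots> < ereal 1.3485" by simp
  finally show ?thesis .
qed

lemma odd_class_inj:
  assumes "odd z1" "odd z2" "conj_class (of_int z1, 0) = conj_class (of_int z2, 0)"
  shows "z1 = z2"
proof -
  have "(of_int z1, 0) \<in> conj_class (of_int z1, 0)" by (rule self_in_class) (simp add: BS_def)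
  then obtain k where k: "(of_int z1 :: rat) = 2 powi k * of_int z2"
    using assms(3) conj_class_Z[of "of_int z2"] by auto
  show ?thesis
  proof (cases "k \<ge> 0")
    case True
    then have "(of_int z1 :: rat) = of_int (2 ^ nat k * z2)" using k by (simp add: power_int_def)
    then have e: "z1 = 2 ^ nat k * z2" by (simp only: of_int_eq_iff)
    then have "nat k = 0" using assms(1) by (cases "nat k") auto
    then show ?thesis using e by simp
  next
    case False
    then have "(of_int z1 :: rat) = of_int z2 / 2 ^ nat (-k)" using k by (simp add: power_int_def field_simps)
    then have "(of_int z2 :: rat) = of_int (2 ^ nat (-k) * z1)" by (simp add: field_simps)
    then have e: "z2 = 2 ^ nat (-k) * z1" by (simp only: of_int_eq_iff)
    then have "nat (-k) = 0" using assms(2) by (cases "nat (-k)") auto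
    then show ?thesis using e by simp
  qed
qed

lemma class_len_bounds:
  assumes "odd z"
  shows "1 \<le> class_len (conj_class (of_int z, 0)) \<and> class_len (conj_class (of_int z, 0)) \<le> cost z"
proof
  let ?C = "conj_class (of_int z :: rat, 0::int)"
  have zC: "(of_int z, 0) \<in> ?C" by (rule self_in_class) (simp add: BS_def)
  have "word_len (of_int z, 0) \<le> length (nafw z)" using nafw_props[of z] by (intro word_len_le) auto
  then have wl: "word_len (of_int z, 0) \<le> cost z" using nafw_props[of z] by (simp add: cost_def)
  have "class_len ?C \<le> word_len (of_int z, 0)" unfolding class_len_def
    by (rule Least_le) (use zC in blast)
  then show "class_len ?C \<le> cost z" using wl by simp
  show "1 \<le> class_len ?C"
  proof (rule ccontr)
    assume "\<not> 1 \<le> class_len ?C"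
    then have c0: "class_len ?C = 0" by simp
    have ex: "\<exists>n. \<exists>g\<in>?C. word_len g = n" using zC by blast
    have "\<exists>g\<in>?C. word_len g = class_len ?C" unfolding class_len_def by (rule LeastI_ex[OF ex])
    then obtain g where g: "g \<in> ?C" "word_len g = 0" using c0 by auto
    then obtain k where gk: "g = (2 powi k * of_int z, 0)" using conj_class_Z[of "of_int z"] by auto
    have "2 powi k * (of_int z :: rat) \<in> dyadic" by (rule dyadic_pow) simp
    then obtain w where w: "set w \<subseteq> bs_gens" "length w = word_len g" "bs_eval w = g"
      using word_len_ex[of g] dyadic_word gk by blast
    then have "g = (0, 0)" using g(2) by simp
    then have "z = 0" using gk by simp
    then show False using assms by simp
  qed
qed

lemma class_in_Sset:
  assumes "odd z"
  shows "conj_class (of_int z, 0) \<in> Sset (class_len (conj_class (of_int z, 0)))"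
proof -
  have "(of_int z, 0::int) \<in> BS" by (simp add: BS_def)
  moreover have "conj_class (of_int z, 0) \<subseteq> Zhalf"
    using conj_class_Z[of "of_int z"] dyadic_pow[of "of_int z"] by (auto simp: Zhalf_def)
  ultimately show ?thesis unfolding Sset_def by blast
qed

definition Od :: "nat \<Rightarrow> int set" where
  "Od B = (\<lambda>y. 4*y+1) ` E (B-5) \<union> (\<lambda>y. 4*y-1) ` E (B-5)"

lemma card_Od: "card (Od B) = 2 * card (E (B-5))"
proof -
  have d: "(\<lambda>y. 4*y+1) ` E (B-5) \<inter> (\<lambda>y. (4::int)*y-1) ` E (B-5) = {}"
  proof -
    have "4*a+1 \<noteq> 4*b-(1::int)" for a b by presburger
    then show ?thesis by blast
  qed
  have "card ((\<lambda>y. 4*y+1) ` E (B-5)) = card (E (B-5))" by (rule card_image) (simp add: inj_on_def)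
  moreover have "card ((\<lambda>y. (4::int)*y-1) ` E (B-5)) = card (E (B-5))" by (rule card_image) (simp add: inj_on_def)
  ultimately show ?thesis unfolding Od_def using d finite_E by (simp add: card_Un_disjoint)
qed

lemma Od_props: assumes B: "5 \<le> B" and z: "z \<in> Od B" shows "odd z \<and> cost z \<le> B"
proof -
  from z obtain y where y: "cost y \<le> B - 5" and "z = 4*y+1 \<or> z = 4*y-1"
    unfolding Od_def E_def by blast
  then consider "z = 4*y+1" | "z = 4*y-1" by blast
  then show ?thesis
  proof cases
    case 1
    have "odd z" unfolding 1 by presburger
    then show ?thesis using cost4p_le[of y] y B 1 by simp
  next
    case 2
    have "odd z" unfolding 2 by presburger
    then show ?thesis using cost4m_le[of y] y B 2 by simp
  qed
qed

lemma Od_count: "5 \<le> B \<Longrightarrow> real (card (Od B)) \<le> (\<Sum>n\<in>{1..B}. real (c0 n))"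
proof -
  assume B: "5 \<le> B"
  let ?f = "\<lambda>z. conj_class (of_int z :: rat, 0::int)"
  have inj: "inj_on ?f (Od B)"
    using odd_class_inj Od_props[OF B] by (meson inj_onI)
  have sub: "?f ` Od B \<subseteq> (\<Union>n\<in>{1..B}. Sset n)"
  proof
    fix C assume "C \<in> ?f ` Od B"
    then obtain z where z: "z \<in> Od B" "C = ?f z" by blast
    then have "odd z" "cost z \<le> B" using Od_props[OF B] by auto
    then show "C \<in> (\<Union>n\<in>{1..B}. Sset n)"
      using class_len_bounds[of z] class_in_Sset[of z] z(2) by fastforce
  qed
  have fin: "finite (\<Union>n\<in>{1..B}. Sset n)" using finite_Sset by simp
  have "card (Od B) = card (?f ` Od B)" using card_image[OF inj] by simp
  also have "\<dots> \<le> card (\<Union>n\<in>{1..B}. Sset n)" by (rule card_mono[OF fin sub])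
  also have "\<dots> \<le> (\<Sum>n\<in>{1..B}. card (Sset n))" by (rule card_UN_le) simp
  finally have "real (card (Od B)) \<le> real (\<Sum>n\<in>{1..B}. card (Sset n))" by (simp only: of_nat_le_iff)
  then show ?thesis by (simp add: c0_Sset)
qed

lemma rho_low: "(13476/10000::real)^5 \<le> (13476/10000)^3 + 2" by (simp add: eval_nat_numeral)

lemma lower_freq: "\<exists>n \<ge> N. 13475/10000 \<le> root n (real (c0 n))"
proof -
  define q :: real where "q = 13475/10000"
  define p :: real where "p = 13476/10000"
  define Bd :: real where "Bd = real (\<Sum>m\<le>N. c0 m)"
  have q1: "1 \<le> q" and p1: "1 \<le> p" unfolding q_def p_def by simp_all
  have ev1: "eventually (\<lambda>B::nat. real B * q^B * p^9 \<le> 2 * p^B) sequentially"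
    unfolding q_def p_def by real_asymp
  have lim: "filterlim (\<lambda>B::nat. q^B) at_top sequentially"
    unfolding q_def by real_asymp
  have ev2: "eventually (\<lambda>B. Bd < q^B) sequentially"
    using lim unfolding filterlim_at_top_dense by blast
  have "eventually (\<lambda>B. real B * q^B * p^9 \<le> 2 * p^B \<and> Bd < q^B \<and> 5 \<le> B) sequentially"
    using ev1 ev2 eventually_ge_at_top[of 5] by eventually_elim auto
  then obtain B where B1: "real B * q^B * p^9 \<le> 2 * p^B" and B2: "Bd < q^B" and B5: "5 \<le> B"
    unfolding eventually_sequentially by blast
  have "p^(B-5) / p^4 \<le> real (card (E (B-5)))" using E_lower[OF _ rho_low] unfolding p_def by simp
  then have "2 * (p^(B-5) / p^4) \<le> real (card (Od B))" by (simp add: card_Od)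
  moreover have "p^B = p^(B-5) * p^5" using B5 by (simp add: power_add[symmetric])
  ultimately have "2 * p^B / p^9 \<le> real (card (Od B))" by (simp add: eval_nat_numeral field_simps)
  moreover have "real B * q^B \<le> 2 * p^B / p^9" using B1 p1 by (simp add: field_simps)
  ultimately have tot: "real B * q^B \<le> (\<Sum>n\<in>{1..B}. real (c0 n))" using Od_count[OF B5] by linarith
  have "\<exists>n\<in>{1..B}. q^B \<le> real (c0 n)"
  proof (rule ccontr)
    assume "\<not> ?thesis"
    then have "\<forall>n\<in>{1..B}. real (c0 n) < q^B" by auto
    then have "(\<Sum>n\<in>{1..B}. real (c0 n)) < (\<Sum>n\<in>{1..B}. q^B)"
      using B5 by (intro sum_strict_mono) auto
    also have "\<dots> = real B * q^B" by simp
    finally show False using tot by simp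
  qed
  then obtain n where n: "1 \<le> n" "n \<le> B" "q^B \<le> real (c0 n)" by auto
  have "N < n"
  proof (rule ccontr)
    assume "\<not> N < n"
    then have "c0 n \<le> (\<Sum>m\<le>N. c0 m)" by (intro member_le_sum) auto
    then have "real (c0 n) \<le> Bd" unfolding Bd_def by (simp only: of_nat_le_iff)
    then show False using n(3) B2 by simp
  qed
  have "q^n \<le> q^B" by (rule power_increasing[OF n(2) q1])
  then have "q^n \<le> real (c0 n)" using n(3) by simp
  then have "root n (q^n) \<le> root n (real (c0 n))" using n(1) by (intro real_root_le_mono) auto
  then have "q \<le> root n (real (c0 n))" using n(1) q1 by (simp add: real_root_power_cancel)
  then show ?thesis using \<open>N < n\<close> unfolding q_def by (intro exI[of _ n]) auto
qed

lemma limsup_lower: "ereal 1.3475 \<le> limsup (\<lambda>n. ereal (root n (real (c0 n))))"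
  unfolding limsup_INF_SUP
proof (rule INF_greatest)
  fix N :: nat
  obtain n where n: "N \<le> n" "13475/10000 \<le> root n (real (c0 n))" using lower_freq[of N] by blast
  show "ereal 1.3475 \<le> (SUP m\<in>{N..}. ereal (root m (real (c0 m))))"
    by (rule SUP_upper2[of n]) (use n in auto)
qed

theorem corollary3p10:
  shows "ereal 1.3475 \<le> limsup (\<lambda>n. ereal (root n (real (c0 n))))
       \<and> limsup (\<lambda>n. ereal (root n (real (c0 n)))) < ereal 1.3485"
  using limsup_lower limsup_upper by blast

end
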